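(* Let $d_2$ be the river metric on $\mathbb R^2$. For $P=(P^{(1)},P^{(2)})\in\mathbb R^2$ let $P^*=(P^{(1)},0)$. Then for all $P_1,P_2\in\mathbb R^2$: (i) if $P_2\in\{(1-a)P_1^*+aP_1:\ a\in[0,1)\}$, then $\mathcal C_{d_2}(P_1,P_2)=\mathbb R^2\setminus\{P_2+t(P_1-P_1^* ):\ t>0\}$; (ii) if $P_1\neq P_2$, $P_2\notin\{(1-a)P_1^*+aP_1:\ a\in[0,1)\}$ and $P_2^{(2)}\neq0$, then $\mathcal C_{d_2}(P_1,P_2)=\{(P_2^{(1)},sP_2^{(2)}):\ s\ge1\}$; (iii) if $P_1^{(1)}\ne P_2^{(1)}$ and $P_2^{(2)}=0$, then $\mathcal C_{d_2}(P_1,P_2)=\{x\in\mathbb R:\ (x-P_2^{(1)})(P_2^{(1)}-P_1^{(1)})\ge0\}\times\mathbb R$; (iv) if $P_1=P_2$, then $\mathcal C_{d_2}(P_1,P_2)=\mathbb R^2$.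
   Context: Points of $\mathbb R^2$ are written $A=(A^{(1)},A^{(2)})$. The river metric is $d_2(A,B)=|A^{(2)}-B^{(2)}|$ if $A^{(1)}=B^{(1)}$, and $d_2(A,B)=|A^{(2)}|+|A^{(1)}-B^{(1)}|+|B^{(2)}|$ if $A^{(1)}\neq B^{(1)}$. For a metric $d$ on a set $M$ and $A,B\in M$, $\mathcal C_d(A,B)=\{X\in M:\ d(X,A)=d(X,B)+d(A,B)<+\infty\}$. *)

theory Defs
  imports "HOL-Analysis.Analysis"
begin

definition river_dist :: "real \<times> real \<Rightarrow> real \<times> real \<Rightarrow> real" where
  "river_dist A B =
     (if fst A = fst B then \<bar>snd A - snd B\<bar>
      else \<bar>snd A\<bar> + \<bar>fst A - fst B\<bar> + \<bar>snd B\<bar>)"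

text \<open>C_d(A,B) = {X. d(X,A) = d(X,B) + d(A,B) < +\<infinity>}; for a real-valued
  metric the finiteness condition is automatic.\<close>
definition metric_cone :: "('a \<Rightarrow> 'a \<Rightarrow> real) \<Rightarrow> 'a \<Rightarrow> 'a \<Rightarrow> 'a set" where
  "metric_cone d A B = {X. d X A = d X B + d A B}"

definition proj_star :: "real \<times> real \<Rightarrow> real \<times> real" where
  "proj_star P = (fst P, 0)"

end

theory Submission
  imports Defs
begin

lemma ex_t: "(b1::real) \<noteq> 0 \<Longrightarrow> (\<exists>t>0. y = b2 + t*b1) \<longleftrightarrow> (b1>0 \<and> y>b2) \<or> (b1<0 \<and> y<b2)"
proof
  assume b: "b1 \<noteq> 0"
  assume "\<exists>t>0. y = b2 + t*b1"
  then obtain t where "t>0" "y = b2+t*b1" by blast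
  then show "(b1>0 \<and> y>b2) \<or> (b1<0 \<and> y<b2)" using b
  proof (cases "b1 > 0")
    case True then have "t*b1 > 0" using \<open>t>0\<close> by simp
    then show ?thesis using True \<open>y = b2+t*b1\<close> by auto
  next
    case False then have "b1 < 0" using b by auto
    then have "t*b1 < 0" using \<open>t>0\<close> by (simp add: mult_pos_neg)
    then show ?thesis using \<open>b1<0\<close> \<open>y = b2+t*b1\<close> by auto
  qed
next
  assume b: "b1 \<noteq> 0" and h: "(b1>0 \<and> y>b2) \<or> (b1<0 \<and> y<b2)"
  show "\<exists>t>0. y = b2 + t*b1"
    apply (rule exI[of _ "(y-b2)/b1"]) using b h by (auto simp: field_simps divide_pos_pos divide_neg_neg)
qed

lemma ex_s: "(b2::real) \<noteq> 0 \<Longrightarrow> (\<exists>s\<ge>1. y = s*b2) \<longleftrightarrow> (b2>0 \<and> y\<ge>b2) \<or> (b2<0 \<and> y\<le>b2)"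
proof
  assume b: "b2 \<noteq> 0"
  assume "\<exists>s\<ge>1. y = s*b2"
  then obtain s where s: "s\<ge>1" "y = s*b2" by blast
  have "b2 > 0 \<Longrightarrow> s*b2 \<ge> 1*b2" using s(1) by (intro mult_right_mono) auto
  moreover have "b2 < 0 \<Longrightarrow> s*b2 \<le> 1*b2" using s(1) by (intro mult_right_mono_neg) auto
  ultimately show "(b2>0 \<and> y\<ge>b2) \<or> (b2<0 \<and> y\<le>b2)" using b s
    by (smt (verit))
next
  assume b: "b2 \<noteq> 0" and h: "(b2>0 \<and> y\<ge>b2) \<or> (b2<0 \<and> y\<le>b2)"
  show "\<exists>s\<ge>1. y = s*b2"
    apply (rule exI[of _ "y/b2"]) using b h by (auto simp: field_simps)
qed

lemma ex_a: "(\<exists>a. 0\<le>a \<and> a<1 \<and> (b2::real) = a*b1) \<longleftrightarrow>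
   (b1>0 \<and> 0\<le>b2 \<and> b2<b1) \<or> (b1<0 \<and> b1<b2 \<and> b2\<le>0) \<or> (b1=0 \<and> b2=0)"
proof
  assume "\<exists>a. 0\<le>a \<and> a<1 \<and> b2 = a*b1"
  then obtain a where a: "0\<le>a" "a<1" "b2=a*b1" by blast
  show "(b1>0 \<and> 0\<le>b2 \<and> b2<b1) \<or> (b1<0 \<and> b1<b2 \<and> b2\<le>0) \<or> (b1=0 \<and> b2=0)"
  proof (cases "b1 > 0")
    case True
    have "a*b1 \<ge> 0" using a(1) True by simp
    moreover have "(1-a)*b1 > 0" using a(2) True by simp
    ultimately show ?thesis using a(3) True by (auto simp: algebra_simps)
  next
    case False
    show ?thesis
    proof (cases "b1 = 0")
      case True then show ?thesis using a by simp
    next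
      case F2: False
      with False have n: "b1 < 0" by auto
      have "a*b1 \<le> 0" using a(1) n by (simp add: mult_nonneg_nonpos)
      moreover have "(a-1)*b1 > 0" using a(2) n by (intro mult_neg_neg) auto
      ultimately show ?thesis using a(3) n by (auto simp: algebra_simps)
    qed
  qed
next
  assume h: "(b1>0 \<and> 0\<le>b2 \<and> b2<b1) \<or> (b1<0 \<and> b1<b2 \<and> b2\<le>0) \<or> (b1=0 \<and> b2=0)"
  show "\<exists>a. 0\<le>a \<and> a<1 \<and> b2 = a*b1"
  proof (cases "b1 = 0")
    case True then show ?thesis using h by auto
  next
    case False
    show ?thesis apply (rule exI[of _ "b2/b1"]) using h False
      by (auto simp: field_simps zero_le_divide_iff)
  qed
qed

lemma seg_iff: "(P2::real\<times>real) \<in> {(1 - a) *\<^sub>R proj_star P1 + a *\<^sub>R P1 | a. 0 \<le> a \<and> a < 1}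
   \<longleftrightarrow> fst P2 = fst P1 \<and> (\<exists>a. 0\<le>a \<and> a<1 \<and> snd P2 = a * snd P1)"
proof -
  have e: "(1 - a) *\<^sub>R proj_star P1 + a *\<^sub>R P1 = (fst P1, a * snd P1)" for a
    by (cases P1) (simp add: proj_star_def algebra_simps)
  show ?thesis unfolding e by (cases P2) auto
qed

lemma excl_iff: "(X::real\<times>real) \<in> {P2 + t *\<^sub>R (P1 - proj_star P1) | t. t > 0}
  \<longleftrightarrow> fst X = fst P2 \<and> (\<exists>t>0. snd X = snd P2 + t * snd P1)"
proof -
  have e: "P2 + t *\<^sub>R (P1 - proj_star P1) = (fst P2, snd P2 + t * snd P1)" for t
    by (cases P1; cases P2) (simp add: proj_star_def)
  show ?thesis unfolding e by (cases X) auto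
qed

lemma ray_iff: "(X::real\<times>real) \<in> {(fst P2, s * snd P2) | s. s \<ge> 1}
  \<longleftrightarrow> fst X = fst P2 \<and> (\<exists>s\<ge>1. snd X = s * snd P2)"
  by (cases X) auto

lemma cone_iff: "X \<in> metric_cone river_dist P1 P2 \<longleftrightarrow> river_dist X P1 = river_dist X P2 + river_dist P1 P2"
  by (simp add: metric_cone_def)

lemma partI:
  assumes "(a1,b1) \<noteq> (a2,b2)" "a2 = a1"
    "(b1>0 \<and> 0\<le>b2 \<and> b2<b1) \<or> (b1<0 \<and> b1<b2 \<and> b2\<le>0) \<or> (b1=0 \<and> b2=0)"
  shows "(x,y) \<in> metric_cone river_dist (a1,b1) (a2,b2) \<longleftrightarrow>
     \<not>(x = a2 \<and> ((b1>0 \<and> y>b2) \<or> (b1<0 \<and> y<b2)))"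
  unfolding cone_iff river_dist_def using assms by (simp add: abs_if split: if_splits; linarith)

lemma rd: "river_dist (x,y) (a,b) = (if x = a then \<bar>y-b\<bar> else \<bar>y\<bar>+\<bar>x-a\<bar>+\<bar>b\<bar>)"
  by (simp add: river_dist_def)

lemma partII:
  assumes "(a1,b1) \<noteq> (a2,b2)"
    "\<not>(a2 = a1 \<and> ((b1>0 \<and> 0\<le>b2 \<and> b2<b1) \<or> (b1<0 \<and> b1<b2 \<and> b2\<le>0) \<or> (b1=0 \<and> b2=0)))"
    "b2 \<noteq> 0"
  shows "(x,y) \<in> metric_cone river_dist (a1,b1) (a2,b2) \<longleftrightarrow>
     x = a2 \<and> ((b2>0 \<and> y\<ge>b2) \<or> (b2<0 \<and> y\<le>b2))"
proof (cases "a1 = a2")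
  case True
  have ne: "b1 \<noteq> b2" using assms(1) True by auto
  have ns: "\<not>((b1>0 \<and> 0\<le>b2 \<and> b2<b1) \<or> (b1<0 \<and> b1<b2 \<and> b2\<le>0) \<or> (b1=0 \<and> b2=0))"
    using assms(2) True by auto
  show ?thesis
  proof (cases "x = a2")
    case True
    have "(\<bar>y-b1\<bar> = \<bar>y-b2\<bar> + \<bar>b1-b2\<bar>) \<longleftrightarrow> ((b2>0 \<and> y\<ge>b2) \<or> (b2<0 \<and> y\<le>b2))"
      using ns ne assms(3) by (smt (verit))
    then show ?thesis using True \<open>a1 = a2\<close> by (simp add: cone_iff rd)
  next
    case False
    have "\<bar>b1\<bar> \<noteq> \<bar>b2\<bar> + \<bar>b1-b2\<bar>"
      using ns ne assms(3) by (smt (verit))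
    then show ?thesis using False \<open>a1 = a2\<close> by (simp add: cone_iff rd)
  qed
next
  case F: False
  show ?thesis
  proof (cases "x = a2")
    case True
    have "(\<bar>y\<bar> + \<bar>a2-a1\<bar> + \<bar>b1\<bar> = \<bar>y-b2\<bar> + (\<bar>b1\<bar>+\<bar>a1-a2\<bar>+\<bar>b2\<bar>)) \<longleftrightarrow> ((b2>0 \<and> y\<ge>b2) \<or> (b2<0 \<and> y\<le>b2))"
      using assms(3) by (smt (verit))
    then show ?thesis using True F by (simp add: cone_iff rd)
  next
    case False
    show ?thesis
    proof (cases "x = a1")
      case True
      have "\<bar>y-b1\<bar> \<noteq> \<bar>y\<bar> + \<bar>x-a2\<bar> + \<bar>b2\<bar> + (\<bar>b1\<bar>+\<bar>a1-a2\<bar>+\<bar>b2\<bar>)"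
        using assms(3) True F by (smt (verit))
      then show ?thesis using True F False by (simp add: cone_iff rd)
    next
      case F2: False
      have "\<bar>y\<bar>+\<bar>x-a1\<bar>+\<bar>b1\<bar> \<noteq> \<bar>y\<bar> + \<bar>x-a2\<bar> + \<bar>b2\<bar> + (\<bar>b1\<bar>+\<bar>a1-a2\<bar>+\<bar>b2\<bar>)"
        using assms(3) by (smt (verit))
      then show ?thesis using F2 F False by (simp add: cone_iff rd)
    qed
  qed
qed

lemma prod_sign: "(0::real) \<le> (x - a2) * (a2 - a1) \<longleftrightarrow> (a2 > a1 \<and> x \<ge> a2) \<or> (a2 < a1 \<and> x \<le> a2) \<or> a1 = a2 \<or> x = a2"
  by (auto simp: zero_le_mult_iff)

lemma partIII:
  assumes "a1 \<noteq> a2" "b2 = 0"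
  shows "(x,y) \<in> metric_cone river_dist (a1,b1) (a2,b2) \<longleftrightarrow>
     (0::real) \<le> (x - a2) * (a2 - a1)"
  unfolding cone_iff river_dist_def prod_sign using assms apply (cases "x = a1"; cases "x = a2"; cases "a1 = a2")
  apply simp_all
  apply (smt (verit))+
  done

theorem proposition2p5:
  fixes P1 P2 :: "real \<times> real"
  shows
  "(P1 \<noteq> P2 \<and> P2 \<in> {(1 - a) *\<^sub>R proj_star P1 + a *\<^sub>R P1 | a. 0 \<le> a \<and> a < 1} \<longrightarrow>
      metric_cone river_dist P1 P2 = UNIV - {P2 + t *\<^sub>R (P1 - proj_star P1) | t. t > 0})
 \<and> (P1 \<noteq> P2 \<and> P2 \<notin> {(1 - a) *\<^sub>R proj_star P1 + a *\<^sub>R P1 | a. 0 \<le> a \<and> a < 1}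
      \<and> snd P2 \<noteq> 0 \<longrightarrow>
      metric_cone river_dist P1 P2 = {(fst P2, s * snd P2) | s. s \<ge> 1})
 \<and> (fst P1 \<noteq> fst P2 \<and> snd P2 = 0 \<longrightarrow>
      metric_cone river_dist P1 P2 = {x. (x - fst P2) * (fst P2 - fst P1) \<ge> 0} \<times> UNIV)
 \<and> (P1 = P2 \<longrightarrow> metric_cone river_dist P1 P2 = UNIV)"
proof -
  obtain a1 b1 where p1: "P1 = (a1,b1)" by (cases P1)
  obtain a2 b2 where p2: "P2 = (a2,b2)" by (cases P2)
  let ?seg = "(b1>0 \<and> 0\<le>b2 \<and> b2<b1) \<or> (b1<0 \<and> b1<b2 \<and> b2\<le>0) \<or> (b1=0 \<and> b2=0)"
  have seg: "P2 \<in> {(1 - a) *\<^sub>R proj_star P1 + a *\<^sub>R P1 | a. 0 \<le> a \<and> a < 1} \<longleftrightarrow> a2 = a1 \<and> ?seg"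
    unfolding seg_iff ex_a p1 p2 by simp
  have I: "metric_cone river_dist P1 P2 = UNIV - {P2 + t *\<^sub>R (P1 - proj_star P1) | t. t > 0}"
    if h: "P1 \<noteq> P2" "a2 = a1" ?seg
  proof -
    have b1: "b1 \<noteq> 0" using h p1 p2 by auto
    show ?thesis
    proof (rule set_eqI)
      fix X :: "real \<times> real"
      obtain x y where X: "X = (x,y)" by (cases X)
      show "X \<in> metric_cone river_dist P1 P2 \<longleftrightarrow> X \<in> UNIV - {P2 + t *\<^sub>R (P1 - proj_star P1) | t. t > 0}"
        unfolding X p1 p2 partI[OF h(1)[unfolded p1 p2] h(2) h(3)]
        using excl_iff[of "(x,y)" "(a2,b2)" "(a1,b1)"] ex_t[OF b1, of y b2] by simp
    qed
  qed
  have II: "metric_cone river_dist P1 P2 = {(fst P2, s * snd P2) | s. s \<ge> 1}"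
    if h: "P1 \<noteq> P2" "\<not>(a2 = a1 \<and> ?seg)" "b2 \<noteq> 0"
  proof (rule set_eqI)
    fix X :: "real \<times> real"
    obtain x y where X: "X = (x,y)" by (cases X)
    show "X \<in> metric_cone river_dist P1 P2 \<longleftrightarrow> X \<in> {(fst P2, s * snd P2) | s. s \<ge> 1}"
      unfolding X p1 p2 partII[OF h(1)[unfolded p1 p2] h(2) h(3)]
      using ray_iff[of "(x,y)" "(a2,b2)"] ex_s[OF h(3), of y] by simp
  qed
  have III: "metric_cone river_dist P1 P2 = {x. (x - fst P2) * (fst P2 - fst P1) \<ge> 0} \<times> UNIV"
    if h: "a1 \<noteq> a2" "b2 = 0"
  proof (rule set_eqI)
    fix X :: "real \<times> real"
    obtain x y where X: "X = (x,y)" by (cases X)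
    show "X \<in> metric_cone river_dist P1 P2 \<longleftrightarrow> X \<in> {x. (x - fst P2) * (fst P2 - fst P1) \<ge> 0} \<times> UNIV"
      unfolding X p1 p2 partIII[OF h] by simp
  qed
  have IV: "metric_cone river_dist P1 P2 = UNIV" if "P1 = P2"
    using that by (auto simp: metric_cone_def river_dist_def)
  show ?thesis
    using I II III IV seg p1 p2 by auto
qed

end
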